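(* Let $V$ be a finite-dimensional complex vector space and $K\subseteq\bigwedge^2V$ a subspace. If $[a\wedge b]$ is an isolated point of $\mathbf{P}K^\perp\cap\mathrm{Gr}_2(V^\vee)$, then the line $\ell_{ab}\subseteq\mathbf{P}V^\vee$ through $[a]$ and $[b]$ is a connected component of the projectivized resonance variety $\mathbf{R}(V,K)$, and the span of $a,b$ is isotropic.
   Context: $K^\perp\subseteq\bigwedge^2V^\vee$ is the annihilator of $K$; $\mathrm{Gr}_2(V^\vee)\subseteq\mathbf{P}(\bigwedge^2V^\vee)$ is Plücker embedded. The resonance variety is $\mathcal{R}(V,K)=\{a\in V^\vee:\exists b\in V^\vee,\ a\wedge b\in K^\perp\setminus\{0\}\}\cup\{0\}$, and $\mathbf{R}(V,K)\subseteq\mathbf{P}V^\vee$ is its projectivization (the union of the lines $\ell_{ab}$ for $[a\wedge b]\in\mathbf{P}K^\perp\cap\mathrm{Gr}_2(V^\vee)$). A subspace $\overline{V}^\vee\subseteq V^\vee$ is isotropic if $\bigwedge^2\overline V^\vee\subseteq K^\perp$. *)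

theory Defs
  imports "HOL-Analysis.Analysis"
begin

text \<open>Choosing a basis of V (dim n, indexed by the finite type 'n), the dual
  V^vee is modelled by complex ^ 'n. Both exterior squares are modelled as antisymmetric
  arrays complex ^ ('n * 'n): the element w of wedge^2 V^vee has coordinates w(i,j) = w(e_i,e_j),
  the element k of wedge^2 V has coordinates k(i,j) w.r.t. the basis e_i wedge e_j (antisymmetrised).
  The natural pairing is (1/2) * sum_{i,j} w(i,j) k(i,j); the factor is irrelevant for annihilators.\<close>

definition alt :: "complex ^ ('n::finite \<times> 'n) \<Rightarrow> bool" where
  "alt w \<longleftrightarrow> (\<forall>i j. w $ (i, j) = - w $ (j, i))"

definition Alt2 :: "(complex ^ ('n::finite \<times> 'n)) set" where
  "Alt2 = {w. alt w}"

definition wedge :: "complex ^ 'n::finite \<Rightarrow> complex ^ 'n::finite \<Rightarrow> complex ^ ('n::finite \<times> 'n)" where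
  "wedge a b = (\<chi> p. a $ fst p * b $ snd p - a $ snd p * b $ fst p)"

definition pairing :: "complex ^ ('n::finite \<times> 'n) \<Rightarrow> complex ^ ('n::finite \<times> 'n) \<Rightarrow> complex" where
  "pairing w k = (\<Sum>p\<in>UNIV. w $ p * k $ p)"

definition csubspace :: "(complex ^ 'k::finite) set \<Rightarrow> bool" where
  "csubspace S \<longleftrightarrow> 0 \<in> S \<and> (\<forall>x\<in>S. \<forall>y\<in>S. x + y \<in> S) \<and> (\<forall>c::complex. \<forall>x\<in>S. c *s x \<in> S)"

definition perp :: "(complex ^ ('n::finite \<times> 'n)) set \<Rightarrow> (complex ^ ('n::finite \<times> 'n)) set" where
  "perp K = {w \<in> Alt2. \<forall>k\<in>K. pairing w k = 0}"

definition span2 :: "complex ^ 'k::finite \<Rightarrow> complex ^ 'k::finite \<Rightarrow> (complex ^ 'k::finite) set" where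
  "span2 a b = {c *s a + d *s b | c d :: complex. True}"

definition pt :: "complex ^ 'k::finite \<Rightarrow> (complex ^ 'k::finite) set" where
  "pt v = {c *s v | c :: complex. True}"

definition PP :: "(complex ^ 'k::finite) set \<Rightarrow> (complex ^ 'k::finite) set set" where
  "PP S = {pt v | v. v \<in> S \<and> v \<noteq> 0}"

text \<open>the (classical) topology of P(W): quotient topology of W - {0}\<close>
definition proj_topology :: "(complex ^ 'k::finite) set topology" where
  "proj_topology = topology (\<lambda>U. U \<subseteq> PP UNIV \<and> open {v. v \<noteq> 0 \<and> pt v \<in> U})"

text \<open>Gr_2(V^vee) in P(wedge^2 V^vee) via the Pluecker embedding\<close>
definition Gr2 :: "(complex ^ ('n::finite \<times> 'n)) set set" where
  "Gr2 = PP {wedge a b | a b. True}"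

definition resonance :: "(complex ^ ('n::finite \<times> 'n)) set \<Rightarrow> (complex ^ 'n::finite) set" where
  "resonance K = {a. \<exists>b. wedge a b \<in> perp K - {0}} \<union> {0}"

definition Presonance :: "(complex ^ ('n::finite \<times> 'n)) set \<Rightarrow> (complex ^ 'n::finite) set set" where
  "Presonance K = PP (resonance K)"

text \<open>isotropic subspace: wedge^2 W subset of K^perp (wedge^2 W is spanned by the x wedge y)\<close>
definition isotropic :: "(complex ^ ('n::finite \<times> 'n)) set \<Rightarrow> (complex ^ 'n::finite) set \<Rightarrow> bool" where
  "isotropic K W \<longleftrightarrow> (\<forall>x\<in>W. \<forall>y\<in>W. wedge x y \<in> perp K)"

definition isolated_point_of :: "'a topology \<Rightarrow> 'a set \<Rightarrow> 'a \<Rightarrow> bool" where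
  "isolated_point_of T X x \<longleftrightarrow> x \<in> X \<and> (\<exists>U. openin T U \<and> U \<inter> X = {x})"

end

theory Submission
  imports Defs
begin


lemma wedge_nth: "wedge a b $ (i, j) = a $ i * b $ j - a $ j * b $ i"
  by (simp add: wedge_def)

lemma wedge_span: "wedge (c *s a + d *s b) (c' *s a + d' *s b) = (c * d' - d * c') *s wedge a b"
  by (simp add: vec_eq_iff wedge_def algebra_simps)

lemma wedge_add_right: "wedge x (u + v) = wedge x u + wedge x v"
  by (simp add: vec_eq_iff wedge_def algebra_simps)

lemma wedge_smult_right: "wedge x (c *s u) = c *s wedge x u"
  by (simp add: vec_eq_iff wedge_def algebra_simps)

lemma wedge_smult_left: "wedge (c *s x) u = c *s wedge x u"
  by (simp add: vec_eq_iff wedge_def algebra_simps)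

lemma wedge_diff_right: "wedge x (u - v) = wedge x u - wedge x v"
  by (simp add: vec_eq_iff wedge_def algebra_simps)

lemma wedge_self: "wedge x x = 0"
  by (simp add: vec_eq_iff wedge_def algebra_simps)

lemma alt_wedge: "alt (wedge x y)"
  by (simp add: alt_def wedge_def)

lemma scaleR_vs: "r *\<^sub>R (x :: complex ^ 'k::finite) = complex_of_real r *s x"
proof (subst vec_eq_iff, rule allI)
  fix i
  have "(r *\<^sub>R x)$i = r *\<^sub>R (x$i)" by simp
  also have "\<dots> = of_real r * x$i" by (rule scaleR_conv_of_real)
  finally show "(r *\<^sub>R x)$i = (complex_of_real r *s x)$i" by simp
qed

lemma pairing_smult: "pairing (c *s w) k = c * pairing w k"
  by (simp add: pairing_def sum_distrib_left mult.assoc)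

lemma pairing_add: "pairing (w + v) k = pairing w k + pairing v k"
  by (simp add: pairing_def distrib_right sum.distrib)

lemma alt_smult: assumes "alt w" shows "alt (c *s w)"
  unfolding alt_def
proof (intro allI)
  fix i j
  have "w$(i,j) = - w$(j,i)" using assms unfolding alt_def by blast
  then show "(c *s w) $ (i, j) = - (c *s w) $ (j, i)" by simp
qed

lemma alt_add: assumes "alt w" "alt v" shows "alt (w + v)"
  unfolding alt_def
proof (intro allI)
  fix i j
  have "w$(i,j) = - w$(j,i)" "v$(i,j) = - v$(j,i)" using assms unfolding alt_def by blast+
  then show "(w + v) $ (i, j) = - (w + v) $ (j, i)" by simp
qed

lemma perp_smult: "w \<in> perp K \<Longrightarrow> c *s w \<in> perp K"
  unfolding perp_def Alt2_def by (auto simp: alt_smult pairing_smult)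

lemma perp_add: "w \<in> perp K \<Longrightarrow> v \<in> perp K \<Longrightarrow> w + v \<in> perp K"
  unfolding perp_def Alt2_def by (auto simp: alt_add pairing_add)

lemma pt_self: "v \<in> pt v"
  unfolding pt_def by (rule CollectI, rule exI[of _ 1], simp)

lemma pt_zero: "pt 0 = {0}"
  by (auto simp: pt_def)

lemma pt_eq: assumes "pt v = pt u" "u \<noteq> 0" shows "\<exists>c. c \<noteq> 0 \<and> v = c *s u"
proof -
  have "v \<in> pt u" using pt_self assms by metis
  then obtain c where c: "v = c *s u" by (auto simp: pt_def)
  have "u \<in> pt v" using pt_self assms by metis
  then have "v \<noteq> 0" using assms by (auto simp: pt_def)
  with c show ?thesis by auto
qed

lemma pt_smult: "c \<noteq> 0 \<Longrightarrow> pt (c *s v) = pt v"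
  apply (auto simp: pt_def vector_smult_assoc)
  apply (rule_tac x="ca / c" in exI)
  apply (simp add: vector_smult_assoc)
  done

lemma span2_smult: "x \<in> span2 a b \<Longrightarrow> c *s x \<in> span2 a b"
  apply (auto simp: span2_def vector_add_ldistrib vector_smult_assoc)
  apply (rule_tac x="c * ca" in exI, rule_tac x="c * d" in exI, simp)
  done

lemma span2_add: "x \<in> span2 a b \<Longrightarrow> y \<in> span2 a b \<Longrightarrow> x + y \<in> span2 a b"
  apply (auto simp: span2_def)
  apply (rule_tac x="c + ca" in exI, rule_tac x="d + da" in exI)
  apply (simp add: vector_sadd_rdistrib algebra_simps)
  done

lemma span2_zero: "0 \<in> span2 a b"
  unfolding span2_def by (rule CollectI, rule exI[of _ 0], rule exI[of _ 0], simp)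

lemma subspace_span2: "subspace (span2 a b)"
  unfolding subspace_def using span2_zero span2_add span2_smult by (auto simp: scaleR_vs)

lemma closed_span2: "closed (span2 a b)"
  by (rule closed_subspace[OF subspace_span2])

lemma wedge_in_span:
  assumes "wedge u v = c *s wedge a b" "c \<noteq> 0" "wedge a b \<noteq> 0"
  shows "u \<in> span2 a b"
proof -
  obtain i j where ij: "wedge a b $ (i, j) \<noteq> 0"
    using assms(3) by (metis vec_eq_iff zero_index surj_pair)
  define D where "D = a$i * b$j - a$j * b$i"
  have D: "D \<noteq> 0" using ij by (simp add: D_def wedge_nth)
  define al where "al = (u$i * b$j - u$j * b$i) / D"
  define be where "be = (a$i * u$j - a$j * u$i) / D"
  have "u = al *s a + be *s b"
  proof (subst vec_eq_iff, rule allI)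
    fix l
    have e1: "u$i * v$j - u$j * v$i = c * (a$i * b$j - a$j * b$i)"
      using arg_cong[OF assms(1), of "\<lambda>w. w $ (i,j)"] by (simp add: wedge_nth)
    have e2: "u$i * v$l - u$l * v$i = c * (a$i * b$l - a$l * b$i)"
      using arg_cong[OF assms(1), of "\<lambda>w. w $ (i,l)"] by (simp add: wedge_nth)
    have e3: "u$j * v$l - u$l * v$j = c * (a$j * b$l - a$l * b$j)"
      using arg_cong[OF assms(1), of "\<lambda>w. w $ (j,l)"] by (simp add: wedge_nth)
    have id: "(u$i * v$j - u$j * v$i) * u$l - (u$i * v$l - u$l * v$i) * u$j
              + (u$j * v$l - u$l * v$j) * u$i = 0"
      by (simp add: algebra_simps)
    have "c * ((a$i * b$j - a$j * b$i) * u$l - (a$i * b$l - a$l * b$i) * u$j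
              + (a$j * b$l - a$l * b$j) * u$i) = 0"
      using id unfolding e1 e2 e3 by (simp add: algebra_simps)
    then have br0: "(a$i * b$j - a$j * b$i) * u$l - (a$i * b$l - a$l * b$i) * u$j
              + (a$j * b$l - a$l * b$j) * u$i = 0"
      using assms(2) by simp
    have "D * u$l - ((a$i * b$l - a$l * b$i) * u$j - (a$j * b$l - a$l * b$j) * u$i)
       = (a$i * b$j - a$j * b$i) * u$l - (a$i * b$l - a$l * b$i) * u$j
              + (a$j * b$l - a$l * b$j) * u$i"
      unfolding D_def by (simp add: algebra_simps)
    then have br: "D * u$l = (a$i * b$l - a$l * b$i) * u$j - (a$j * b$l - a$l * b$j) * u$i"
      using br0 by simp
    have r1: "D * (al * a$l + be * b$l) = (u$i*b$j - u$j*b$i) * a$l + (a$i*u$j - a$j*u$i) * b$l"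
      using D unfolding al_def be_def by (simp add: distrib_left)
    have r2: "(a$i * b$l - a$l * b$i) * u$j - (a$j * b$l - a$l * b$j) * u$i
       = (u$i*b$j - u$j*b$i) * a$l + (a$i*u$j - a$j*u$i) * b$l"
      by (simp add: algebra_simps)
    have "D * u$l = D * (al * a$l + be * b$l)"
      unfolding br r1 r2 by (rule refl)
    then show "u $ l = (al *s a + be *s b) $ l" using D by simp
  qed
  then show ?thesis unfolding span2_def by auto
qed


lemma smult_eq_0_iff: "(c *s (v :: complex ^ 'k::finite) = 0) \<longleftrightarrow> c = 0 \<or> v = 0"
proof
  assume h: "c *s v = 0"
  show "c = 0 \<or> v = 0"
  proof (cases "c = 0")
    case False
    have "v = (1/c) *s (c *s v)" using False by (simp add: vector_smult_assoc)
    then have "v = 0" using h by simp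
    then show ?thesis by simp
  qed simp
qed auto

lemma wedge_zero_right: "wedge x 0 = 0"
  by (simp add: vec_eq_iff wedge_def)

lemma wedge_zero_left: "wedge 0 x = 0"
  by (simp add: vec_eq_iff wedge_def)

lemma norm_smult_vec: "norm (c *s (z :: complex ^ 'k::finite)) = cmod c * norm z"
proof -
  have "norm (c *s z) = L2_set (\<lambda>i. cmod c * norm (z $ i)) UNIV"
    unfolding norm_vec_def by (simp add: norm_mult)
  also have "\<dots> = cmod c * L2_set (\<lambda>i. norm (z $ i)) UNIV"
    by (rule L2_set_right_distrib[symmetric]) simp
  finally show ?thesis by (simp add: norm_vec_def)
qed

lemma solve_z:
  fixes u z :: "complex ^ 'k::finite"
  assumes "t \<noteq> 0" "u + t *s z = \<mu> *s u"
  shows "z = ((\<mu> - 1) / t) *s u"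
proof (subst vec_eq_iff, rule allI)
  fix i
  have "(u + t *s z) $ i = (\<mu> *s u) $ i" using assms(2) by simp
  then have "u$i + t * z$i = \<mu> * u$i" by simp
  then show "z $ i = (((\<mu> - 1) / t) *s u) $ i" using assms(1)
    by (simp add: field_simps)
qed

lemma istop_proj: "istopology (\<lambda>U. U \<subseteq> PP UNIV \<and> open {v. v \<noteq> 0 \<and> pt v \<in> U})"
  unfolding istopology_def
proof (rule conjI)
  show "\<forall>S T. S \<subseteq> PP UNIV \<and> open {v. v \<noteq> 0 \<and> pt v \<in> S} \<longrightarrow>
      T \<subseteq> PP UNIV \<and> open {v. v \<noteq> 0 \<and> pt v \<in> T} \<longrightarrow>
      S \<inter> T \<subseteq> PP UNIV \<and> open {v. v \<noteq> 0 \<and> pt v \<in> S \<inter> T}"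
  proof (intro allI impI)
    fix S T :: "(complex ^ 'k::finite) set set"
    assume S: "S \<subseteq> PP UNIV \<and> open {v. v \<noteq> 0 \<and> pt v \<in> S}"
      and T: "T \<subseteq> PP UNIV \<and> open {v. v \<noteq> 0 \<and> pt v \<in> T}"
    have "{v. v \<noteq> 0 \<and> pt v \<in> S \<inter> T} = {v. v \<noteq> 0 \<and> pt v \<in> S} \<inter> {v. v \<noteq> 0 \<and> pt v \<in> T}"
      by auto
    then show "S \<inter> T \<subseteq> PP UNIV \<and> open {v. v \<noteq> 0 \<and> pt v \<in> S \<inter> T}"
      using S T by (auto intro: open_Int)
  qed
  show "\<forall>KK. (\<forall>K\<in>KK. K \<subseteq> PP UNIV \<and> open {v. v \<noteq> 0 \<and> pt v \<in> K}) \<longrightarrow>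
      \<Union>KK \<subseteq> PP UNIV \<and> open {v. v \<noteq> 0 \<and> pt v \<in> \<Union>KK}"
  proof (intro allI impI)
    fix KK :: "(complex ^ 'k::finite) set set set"
    assume H: "\<forall>K\<in>KK. K \<subseteq> PP UNIV \<and> open {v. v \<noteq> 0 \<and> pt v \<in> K}"
    have "{v. v \<noteq> 0 \<and> pt v \<in> \<Union>KK} = (\<Union>K\<in>KK. {v. v \<noteq> 0 \<and> pt v \<in> K})"
      by auto
    then show "\<Union>KK \<subseteq> PP UNIV \<and> open {v. v \<noteq> 0 \<and> pt v \<in> \<Union>KK}"
      using H by (auto intro!: open_UN)
  qed
qed

lemma openin_proj: "openin proj_topology U \<longleftrightarrow> U \<subseteq> PP UNIV \<and> open {v. v \<noteq> 0 \<and> pt v \<in> U}"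
  unfolding proj_topology_def topology_inverse'[OF istop_proj] by (rule refl)

lemma pt_in_PP: "v \<in> S \<Longrightarrow> v \<noteq> 0 \<Longrightarrow> pt v \<in> PP S"
  unfolding PP_def by blast

lemma topspace_proj: "topspace proj_topology = PP UNIV"
proof
  show "topspace proj_topology \<subseteq> PP UNIV"
  proof
    fix p assume "p \<in> topspace proj_topology"
    then obtain S where S: "openin proj_topology S" "p \<in> S" unfolding topspace_def by blast
    then show "p \<in> PP UNIV" unfolding openin_proj by blast
  qed
  have e: "{v. v \<noteq> 0 \<and> pt v \<in> PP UNIV} = - {0}"
    using pt_in_PP[of _ UNIV] by blast
  have "open {v. v \<noteq> 0 \<and> pt v \<in> PP UNIV}" unfolding e by (rule open_Compl[OF closed_singleton])
  then have "openin proj_topology (PP UNIV)"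
    unfolding openin_proj by simp
  then show "PP UNIV \<subseteq> topspace proj_topology"
    by (rule openin_subset)
qed

lemma clopen_component:
  assumes "connectedin X C" "C \<noteq> {}" "openin X C" "closedin X C"
  shows "C \<in> connected_components_of X"
proof -
  obtain x where x: "x \<in> C" using assms(2) by blast
  have xt: "x \<in> topspace X" using openin_subset[OF assms(3)] x by (rule subsetD)
  define D where "D = connected_component_of_set X x"
  have D: "D \<in> connected_components_of X"
    unfolding D_def by (simp add: connected_component_in_connected_components_of xt)
  have CD: "C \<subseteq> D" unfolding D_def by (rule connected_component_of_maximal[OF assms(1) x])
  have cs: "connected_space (subtopology X D)"
    unfolding D_def by (rule connected_space_subtopology[OF connectedin_connected_component_of])
  have o: "openin (subtopology X D) (C \<inter> D)"
    unfolding openin_subtopology by (rule exI[of _ C]) (simp add: assms(3))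
  have c: "closedin (subtopology X D) (C \<inter> D)"
    unfolding closedin_subtopology by (rule exI[of _ C]) (simp add: assms(4))
  have tD: "topspace (subtopology X D) = D"
    unfolding D_def topspace_subtopology by (rule Int_absorb1[OF connected_component_of_subset_topspace])
  have "C \<inter> D = {} \<or> C \<inter> D = topspace (subtopology X D)"
    using connected_space_clopen_in[THEN iffD1, OF cs, rule_format, OF conjI[OF o c]] .
  then have "C \<inter> D = {} \<or> C \<inter> D = D" unfolding tD .
  then have "C = D" using CD x by blast
  then show ?thesis using D by simp
qed

lemma pencil:
  fixes K :: "(complex ^ ('n::finite \<times> 'n)) set" and a b x y :: "complex ^ 'n"
  assumes hab: "wedge a b \<in> perp K"
    and Ob: "open Ob" "wedge a b \<in> Ob"
    and iso: "\<And>x y. wedge x y \<in> perp K \<Longrightarrow> wedge x y \<noteq> 0 \<Longrightarrow> wedge x y \<in> Ob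
                 \<Longrightarrow> \<exists>\<mu>. wedge x y = \<mu> *s wedge a b"
    and x: "x \<in> span2 a b" "x \<noteq> 0" and xy: "wedge x y \<in> perp K"
  shows "\<exists>\<nu>. wedge x y = \<nu> *s wedge a b"
proof (rule ccontr)
  assume nm: "\<not> ?thesis"
  obtain c d where xcd: "x = c *s a + d *s b" using x(1) unfolding span2_def by auto
  obtain b' where b': "wedge x b' = wedge a b"
  proof (cases "c = 0")
    case True
    then have "d \<noteq> 0" using x(2) xcd by auto
    have "wedge x ((-1/d) *s a + 0 *s b) = (c*0 - d*(-1/d)) *s wedge a b"
      unfolding xcd by (rule wedge_span)
    also have "\<dots> = wedge a b" using \<open>d \<noteq> 0\<close> True by simp
    finally show ?thesis by (rule that)
  next
    case False
    have "wedge x (0 *s a + (1/c) *s b) = (c*(1/c) - d*0) *s wedge a b"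
      unfolding xcd by (rule wedge_span)
    also have "\<dots> = wedge a b" using False by simp
    finally show ?thesis by (rule that)
  qed
  define z where "z = wedge x y"
  obtain e where e: "e > 0" "ball (wedge a b) e \<subseteq> Ob"
    using Ob unfolding open_contains_ball by blast
  define t where "t = e / (2 * (norm z + 1))"
  have npos: "norm z + 1 > 0" by (simp add: add_nonneg_pos)
  have t: "t > 0" using e npos by (simp add: t_def)
  have "t * norm z \<le> e / 2"
  proof -
    have "t * norm z = (e / 2) * (norm z / (norm z + 1))" unfolding t_def by (simp add: field_simps)
    also have "\<dots> \<le> (e / 2) * 1"
      using e npos by (intro mult_left_mono) (auto simp: field_simps)
    finally show ?thesis by simp
  qed
  then have tz: "t * norm z < e" using e by linarith
  define w where "w = wedge a b + of_real t *s z"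
  have w_eq: "w = wedge x (b' + of_real t *s y)"
    by (simp add: w_def z_def wedge_add_right wedge_smult_right b')
  have wperp: "w \<in> perp K" unfolding w_def z_def using hab xy perp_add perp_smult by blast
  have tc: "complex_of_real t \<noteq> 0" using t by simp
  have wne: "w \<noteq> 0"
  proof
    assume "w = 0"
    then have "wedge a b + of_real t *s z = 0 *s wedge a b" by (simp add: w_def)
    then have "z = ((0 - 1) / of_real t) *s wedge a b" by (rule solve_z[OF tc])
    then have "\<exists>\<nu>. wedge x y = \<nu> *s wedge a b" unfolding z_def by (rule exI)
    then show False using nm by blast
  qed
  have "dist w (wedge a b) = norm (of_real t *s z)"
    by (simp add: w_def dist_norm)
  also have "\<dots> = t * norm z" using t by (simp add: norm_smult_vec)
  finally have "w \<in> ball (wedge a b) e" using tz by (simp add: dist_commute)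
  then have "w \<in> Ob" using e by blast
  then obtain \<mu> where "w = \<mu> *s wedge a b"
    using iso[of x "b' + of_real t *s y"] wperp wne unfolding w_eq by blast
  then have "wedge a b + of_real t *s z = \<mu> *s wedge a b" by (simp add: w_def)
  then have "z = ((\<mu> - 1) / of_real t) *s wedge a b" by (rule solve_z[OF tc])
  then have "\<exists>\<nu>. wedge x y = \<nu> *s wedge a b" unfolding z_def by (rule exI)
  then show False using nm by blast
qed



lemma closure_claim:
  fixes K :: "(complex ^ ('n::finite \<times> 'n)) set" and a b x :: "complex ^ 'n"
  assumes hab: "wedge a b \<in> perp K" "wedge a b \<noteq> 0"
    and Ob: "open Ob" "\<And>c. c \<noteq> 0 \<Longrightarrow> c *s wedge a b \<in> Ob"
    and iso: "\<And>x y. wedge x y \<in> perp K \<Longrightarrow> wedge x y \<noteq> 0 \<Longrightarrow> wedge x y \<in> Ob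
                 \<Longrightarrow> \<exists>\<mu>. wedge x y = \<mu> *s wedge a b"
    and x: "x \<in> span2 a b" "x \<noteq> 0"
  shows "x \<notin> closure {v. v \<notin> span2 a b \<and> (\<exists>y. wedge v y \<in> perp K \<and> wedge v y \<noteq> 0)}"
proof
  define A where "A = {v. v \<notin> span2 a b \<and> (\<exists>y. wedge v y \<in> perp K \<and> wedge v y \<noteq> 0)}"
  assume "x \<in> closure {v. v \<notin> span2 a b \<and> (\<exists>y. wedge v y \<in> perp K \<and> wedge v y \<noteq> 0)}"
  then have xc: "x \<in> closure A" unfolding A_def .
  have abO: "wedge a b \<in> Ob" using Ob(2)[of 1] by simp
  obtain i0 where i0: "x $ i0 \<noteq> 0" using x(2) by (metis vec_eq_iff zero_index)
  define \<delta> where "\<delta> = cmod (x $ i0) / 2"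
  have \<delta>: "\<delta> > 0" using i0 by (simp add: \<delta>_def)
  have "\<forall>k::nat. \<exists>u\<in>A. dist u x < min \<delta> (1 / real (Suc k))"
  proof
    fix k :: nat
    have "min \<delta> (1 / real (Suc k)) > 0" using \<delta> by simp
    then show "\<exists>u\<in>A. dist u x < min \<delta> (1 / real (Suc k))"
      using xc unfolding closure_approachable by blast
  qed
  then obtain xs where xsA: "\<And>k. xs k \<in> A" and xsd: "\<And>k. dist (xs k) x < min \<delta> (1 / real (Suc k))"
    by metis
  have xs_i0: "xs k $ i0 \<noteq> 0" for k
  proof
    assume h: "xs k $ i0 = 0"
    have "norm ((xs k - x) $ i0) \<le> norm (xs k - x)" by (rule Finite_Cartesian_Product.norm_nth_le)
    also have "\<dots> < \<delta>" using xsd[of k] by (simp add: dist_norm)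
    finally have "cmod (x $ i0) < \<delta>" using h by simp
    then show False using \<delta> unfolding \<delta>_def by simp
  qed
  have limx: "xs \<longlonglongrightarrow> x"
  proof (rule LIM_zero_cancel, rule LIMSEQ_norm_0)
    fix n
    show "norm (xs n - x) < 1 / real (Suc n)" using xsd[of n] by (simp add: dist_norm)
  qed
  have "\<forall>k. \<exists>y. norm y = 1 \<and> y $ i0 = 0 \<and> wedge (xs k) y \<in> perp K \<and> wedge (xs k) y \<noteq> 0"
  proof
    fix k
    obtain y where y: "wedge (xs k) y \<in> perp K" "wedge (xs k) y \<noteq> 0"
      using xsA[of k] unfolding A_def by blast
    define y1 where "y1 = y - (y $ i0 / xs k $ i0) *s xs k"
    have w1: "wedge (xs k) y1 = wedge (xs k) y"
      by (simp add: y1_def wedge_diff_right wedge_smult_right wedge_self)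
    have y1i: "y1 $ i0 = 0" using xs_i0[of k] by (simp add: y1_def)
    have y1ne: "y1 \<noteq> 0" using w1 y(2) wedge_zero_right by metis
    define y2 where "y2 = complex_of_real (1 / norm y1) *s y1"
    have "y2 = (1 / norm y1) *\<^sub>R y1" by (simp add: y2_def scaleR_vs)
    then have n2: "norm y2 = 1" using y1ne by simp
    have sc: "complex_of_real (1 / norm y1) \<noteq> 0" using y1ne by simp
    have w2: "wedge (xs k) y2 = complex_of_real (1 / norm y1) *s wedge (xs k) y"
      by (simp add: y2_def wedge_smult_right w1)
    have "y2 $ i0 = 0" by (simp add: y2_def y1i)
    moreover have "wedge (xs k) y2 \<in> perp K" unfolding w2 by (rule perp_smult[OF y(1)])
    moreover have "wedge (xs k) y2 \<noteq> 0" unfolding w2 using sc y(2) smult_eq_0_iff by blast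
    ultimately show "\<exists>y. norm y = 1 \<and> y $ i0 = 0 \<and> wedge (xs k) y \<in> perp K \<and> wedge (xs k) y \<noteq> 0"
      using n2 by blast
  qed
  then obtain ys where ys1: "\<And>k. norm (ys k) = 1" and ysi: "\<And>k. ys k $ i0 = 0"
    and ysp: "\<And>k. wedge (xs k) (ys k) \<in> perp K" and ysn: "\<And>k. wedge (xs k) (ys k) \<noteq> 0"
    by metis
  have "seq_compact (sphere (0 :: complex ^ 'n) 1)"
    by (rule compact_imp_seq_compact[OF compact_sphere])
  moreover have "\<forall>k. ys k \<in> sphere 0 1" using ys1 by simp
  ultimately obtain l r where l: "l \<in> sphere 0 1" and r: "strict_mono (r :: nat \<Rightarrow> nat)"
    and liml: "(ys \<circ> r) \<longlonglongrightarrow> l"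
    by (rule seq_compactE)
  have limxr: "(xs \<circ> r) \<longlonglongrightarrow> x" by (rule LIMSEQ_subseq_LIMSEQ[OF limx r])
  have "(\<lambda>n. (ys \<circ> r) n $ i0) \<longlonglongrightarrow> l $ i0" by (rule tendsto_vec_nth[OF liml])
  moreover have "(\<lambda>n. (ys \<circ> r) n $ i0) = (\<lambda>n. 0)" using ysi by simp
  ultimately have li0: "l $ i0 = 0" using LIMSEQ_const_iff by metis
  have limw: "(\<lambda>n. wedge ((xs \<circ> r) n) ((ys \<circ> r) n)) \<longlonglongrightarrow> wedge x l"
    unfolding wedge_def
    by (intro tendsto_vec_lambda tendsto_diff tendsto_mult tendsto_vec_nth limxr liml)
  have wperp: "wedge x l \<in> perp K"
    unfolding perp_def Alt2_def
  proof (intro CollectI conjI ballI alt_wedge)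
    fix k assume k: "k \<in> K"
    have "(\<lambda>n. pairing (wedge ((xs \<circ> r) n) ((ys \<circ> r) n)) k) \<longlonglongrightarrow> pairing (wedge x l) k"
      unfolding pairing_def
      by (intro tendsto_sum tendsto_mult tendsto_const tendsto_vec_nth limw)
    moreover have "(\<lambda>n. pairing (wedge ((xs \<circ> r) n) ((ys \<circ> r) n)) k) = (\<lambda>n. 0)"
      using ysp k unfolding perp_def by auto
    ultimately show "pairing (wedge x l) k = 0" using LIMSEQ_const_iff by metis
  qed
  have "l \<noteq> 0" using l by auto
  then obtain j where j: "l $ j \<noteq> 0" by (metis vec_eq_iff zero_index)
  have "wedge x l $ (i0, j) \<noteq> 0" using i0 j li0 by (simp add: wedge_nth)
  then have wne: "wedge x l \<noteq> 0" by auto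
  obtain \<nu> where \<nu>: "wedge x l = \<nu> *s wedge a b"
    using pencil[OF hab(1) Ob(1) abO iso x wperp] by blast
  have "\<nu> \<noteq> 0" using wne \<nu> by auto
  then have "wedge x l \<in> Ob" using \<nu> Ob(2) by simp
  then have "eventually (\<lambda>n. wedge ((xs \<circ> r) n) ((ys \<circ> r) n) \<in> Ob) sequentially"
    using topological_tendstoD[OF limw Ob(1)] by blast
  then obtain N where N: "wedge ((xs \<circ> r) N) ((ys \<circ> r) N) \<in> Ob"
    unfolding eventually_sequentially by blast
  then obtain \<mu> where \<mu>: "wedge (xs (r N)) (ys (r N)) = \<mu> *s wedge a b"
    using iso ysp ysn by force
  have "\<mu> \<noteq> 0" using \<mu> ysn[of "r N"] by auto
  then have "xs (r N) \<in> span2 a b" by (rule wedge_in_span[OF \<mu> _ hab(2)])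
  then show False using xsA[of "r N"] unfolding A_def by blast
qed



lemma closure_cone:
  fixes A :: "(complex ^ 'k::finite) set"
  assumes cone: "\<And>c v. c \<noteq> 0 \<Longrightarrow> v \<in> A \<Longrightarrow> c *s v \<in> A"
    and v: "v \<in> closure A" and c: "c \<noteq> 0"
  shows "c *s v \<in> closure A"
  unfolding closure_approachable
proof (intro allI impI)
  fix e :: real assume e: "e > 0"
  have "e / cmod c > 0" using e c by simp
  then obtain y where y: "y \<in> A" "dist y v < e / cmod c"
    using v unfolding closure_approachable by blast
  have "dist (c *s y) (c *s v) = norm (c *s (y - v))"
    by (simp add: dist_norm vector_ssub_ldistrib)
  also have "\<dots> = cmod c * dist y v" by (simp only: norm_smult_vec dist_norm)
  also have "\<dots> < cmod c * (e / cmod c)" using y(2) c by (intro mult_strict_left_mono) auto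
  also have "\<dots> = e" using c by simp
  finally show "\<exists>y\<in>A. dist y (c *s v) < e" using cone[OF c y(1)] by blast
qed

lemma span2_cancel: "c \<noteq> 0 \<Longrightarrow> c *s v \<in> span2 a b \<Longrightarrow> v \<in> span2 a b"
  using span2_smult[of "c *s v" a b "1/c"] by (simp add: vector_smult_assoc)

theorem proposition2p6:
  fixes K :: "(complex ^ ('n::finite \<times> 'n)) set" and a b :: "complex ^ 'n"
  assumes "csubspace K" and "K \<subseteq> Alt2"
    and "isolated_point_of proj_topology (PP (perp K) \<inter> Gr2) (pt (wedge a b))"
  shows "PP (span2 a b) \<in> connected_components_of (subtopology proj_topology (Presonance K))
         \<and> isotropic K (span2 a b)"
proof -
  define ab where "ab = wedge a b"
  obtain U where Uo: "openin proj_topology U" and UI: "U \<inter> (PP (perp K) \<inter> Gr2) = {pt ab}"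
    and p0: "pt ab \<in> PP (perp K)"
    using assms(3) unfolding isolated_point_of_def ab_def by blast
  obtain v where v: "pt ab = pt v" "v \<in> perp K" "v \<noteq> 0" using p0 unfolding PP_def by blast
  have abne: "ab \<noteq> 0"
  proof
    assume "ab = 0"
    then have "v \<in> {0}" using v(1) pt_self[of v] by (simp add: pt_zero)
    then show False using v(3) by simp
  qed
  obtain c0 where "c0 \<noteq> 0" "ab = c0 *s v" using pt_eq[OF v(1) v(3)] by blast
  then have abp: "ab \<in> perp K" using perp_smult v(2) by blast
  define Ob where "Ob = {v. v \<noteq> 0 \<and> pt v \<in> U}"
  have Oopen: "open Ob" using Uo unfolding openin_proj Ob_def by blast
  have pU: "pt ab \<in> U" using UI by blast
  have Ocone: "c *s ab \<in> Ob" if "c \<noteq> 0" for c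
  proof -
    have "pt (c *s ab) = pt ab" by (rule pt_smult[OF that])
    moreover have "c *s ab \<noteq> 0" using that abne smult_eq_0_iff by blast
    ultimately show ?thesis unfolding Ob_def using pU by simp
  qed
  have iso: "\<exists>\<mu>. wedge x y = \<mu> *s ab"
    if "wedge x y \<in> perp K" "wedge x y \<noteq> 0" "wedge x y \<in> Ob" for x y
  proof -
    have "pt (wedge x y) \<in> U" using that(3) unfolding Ob_def by blast
    moreover have "pt (wedge x y) \<in> PP (perp K)" using that by (intro pt_in_PP)
    moreover have "pt (wedge x y) \<in> Gr2" unfolding Gr2_def using that(2) by (intro pt_in_PP) auto
    ultimately have "pt (wedge x y) \<in> {pt ab}" using UI by blast
    then have "pt (wedge x y) = pt ab" by simp
    then show ?thesis using pt_eq abne by blast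
  qed
  define A where "A = {v. v \<notin> span2 a b \<and> (\<exists>y. wedge v y \<in> perp K \<and> wedge v y \<noteq> 0)}"
  have notcl: "x \<notin> closure A" if "x \<in> span2 a b" "x \<noteq> 0" for x
    unfolding A_def
    using closure_claim[OF abp[unfolded ab_def] abne[unfolded ab_def] Oopen Ocone[unfolded ab_def]
        iso[unfolded ab_def] that] .
  have Acone: "c *s v \<in> A" if cA: "c \<noteq> 0" "v \<in> A" for c v
  proof -
    obtain y where y: "wedge v y \<in> perp K" "wedge v y \<noteq> 0" "v \<notin> span2 a b"
      using cA(2) unfolding A_def by blast
    have "c *s v \<notin> span2 a b" using span2_cancel that(1) y(3) by blast
    moreover have "wedge (c *s v) y \<in> perp K" unfolding wedge_smult_left by (rule perp_smult[OF y(1)])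
    moreover have "wedge (c *s v) y \<noteq> 0" unfolding wedge_smult_left using that(1) y(2) smult_eq_0_iff by blast
    ultimately show ?thesis unfolding A_def by blast
  qed
  have wspan: "wedge x y = (c * d' - d * c') *s ab"
    if "x = c *s a + d *s b" "y = c' *s a + d' *s b" for x y c d c' d'
    unfolding that ab_def by (rule wedge_span)
  have isot: "isotropic K (span2 a b)"
    unfolding isotropic_def
  proof (intro ballI)
    fix x y assume "x \<in> span2 a b" "y \<in> span2 a b"
    then obtain c d c' d' where "x = c *s a + d *s b" "y = c' *s a + d' *s b"
      unfolding span2_def by blast
    then have "wedge x y = (c * d' - d * c') *s ab" by (rule wspan)
    then show "wedge x y \<in> perp K" using perp_smult[OF abp, of "c * d' - d * c'"] by (simp only:)
  qed
  define L where "L = PP (span2 a b)"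
  have memL: "pt x \<in> L \<longleftrightarrow> x \<in> span2 a b" if "x \<noteq> 0" for x
  proof
    assume "pt x \<in> L"
    then obtain u where u: "pt x = pt u" "u \<in> span2 a b" "u \<noteq> 0" unfolding L_def PP_def by blast
    then obtain c where "x = c *s u" using pt_eq by blast
    then show "x \<in> span2 a b" using span2_smult u(2) by simp
  next
    assume "x \<in> span2 a b"
    then show "pt x \<in> L" unfolding L_def using that by (rule pt_in_PP)
  qed
  have span_res: "x \<in> resonance K" if xS: "x \<in> span2 a b" "x \<noteq> 0" for x
  proof -
    obtain c d where xcd: "x = c *s a + d *s b" using xS(1) unfolding span2_def by blast
    show ?thesis
    proof (cases "c = 0")
      case False
      have "wedge x b = (c * 1 - d * 0) *s ab"
        by (rule wspan[OF xcd]) simp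
      then have eq: "wedge x b = c *s ab" by simp
      have "wedge x b \<in> perp K" unfolding eq by (rule perp_smult[OF abp])
      moreover have "wedge x b \<noteq> 0" unfolding eq using False abne smult_eq_0_iff by blast
      ultimately have "wedge x b \<in> perp K - {0}" by blast
      then show ?thesis unfolding resonance_def by blast
    next
      case True
      then have "d \<noteq> 0" using that(2) xcd by auto
      have "wedge x a = (c * 0 - d * 1) *s ab"
        by (rule wspan[OF xcd]) simp
      then have eq: "wedge x a = (- d) *s ab" using True by simp
      have nd: "- d \<noteq> 0" using \<open>d \<noteq> 0\<close> by simp
      have "wedge x a \<in> perp K" unfolding eq by (rule perp_smult[OF abp])
      moreover have "wedge x a \<noteq> 0" unfolding eq using nd abne smult_eq_0_iff by blast
      ultimately have "wedge x a \<in> perp K - {0}" by blast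
      then show ?thesis unfolding resonance_def by blast
    qed
  qed
  have LsubR: "L \<subseteq> Presonance K"
  proof
    fix p assume "p \<in> L"
    then obtain u where u: "p = pt u" "u \<in> span2 a b" "u \<noteq> 0" unfolding L_def PP_def by blast
    then show "p \<in> Presonance K" unfolding Presonance_def using span_res pt_in_PP by blast
  qed
  have RsubP: "Presonance K \<subseteq> PP UNIV" unfolding Presonance_def PP_def by blast
  define T0 where "T0 = {pt v | v. v \<noteq> 0 \<and> v \<notin> closure A}"
  have pre: "{v. v \<noteq> 0 \<and> pt v \<in> T0} = - (closure A \<union> {0})"
  proof (intro set_eqI iffI)
    fix v assume "v \<in> {v. v \<noteq> 0 \<and> pt v \<in> T0}"
    then obtain u where u: "v \<noteq> 0" "pt v = pt u" "u \<noteq> 0" "u \<notin> closure A" unfolding T0_def by blast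
    obtain c where c: "c \<noteq> 0" "v = c *s u" using pt_eq[OF u(2) u(3)] by blast
    have "v \<notin> closure A"
    proof
      assume "v \<in> closure A"
      then have "(1/c) *s v \<in> closure A" using closure_cone[OF Acone] c(1) by simp
      then show False using u(4) c by (simp add: vector_smult_assoc)
    qed
    then show "v \<in> - (closure A \<union> {0})" using u(1) by simp
  next
    fix v assume "v \<in> - (closure A \<union> {0})"
    then show "v \<in> {v. v \<noteq> 0 \<and> pt v \<in> T0}" unfolding T0_def by blast
  qed
  have T0open: "openin proj_topology T0"
    unfolding openin_proj
  proof
    show "T0 \<subseteq> PP UNIV" unfolding T0_def using pt_in_PP by blast
    show "open {v. v \<noteq> 0 \<and> pt v \<in> T0}" unfolding pre by (intro open_Compl closed_Un closed_closure closed_singleton)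
  qed
  have LT0: "L = T0 \<inter> Presonance K"
  proof (intro set_eqI iffI)
    fix p assume "p \<in> L"
    then obtain u where u: "p = pt u" "u \<in> span2 a b" "u \<noteq> 0" unfolding L_def PP_def by blast
    then have "p \<in> T0" unfolding T0_def using notcl by blast
    then show "p \<in> T0 \<inter> Presonance K" using LsubR \<open>p \<in> L\<close> by blast
  next
    fix p assume p: "p \<in> T0 \<inter> Presonance K"
    then obtain u where u: "p = pt u" "u \<in> resonance K" "u \<noteq> 0" unfolding Presonance_def PP_def by blast
    obtain v where v: "p = pt v" "v \<noteq> 0" "v \<notin> closure A" using p unfolding T0_def by blast
    obtain c where c: "c \<noteq> 0" "u = c *s v" using pt_eq[of u v] u(1) v(1) v(2) by metis
    have "u \<notin> closure A"
    proof
      assume "u \<in> closure A"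
      then have "(1/c) *s u \<in> closure A" using closure_cone[OF Acone] c(1) by simp
      then show False using v(3) c by (simp add: vector_smult_assoc)
    qed
    then have "u \<notin> A" using closure_subset by blast
    moreover obtain y where "wedge u y \<in> perp K - {0}" using u(2) u(3) unfolding resonance_def by blast
    ultimately have "u \<in> span2 a b" unfolding A_def by blast
    then show "p \<in> L" using memL u(1) u(3) by blast
  qed
  have Lopen: "openin (subtopology proj_topology (Presonance K)) L"
    unfolding openin_subtopology using T0open LT0 by blast
  have pre2: "{v. v \<noteq> 0 \<and> pt v \<in> PP UNIV - L} = - span2 a b"
  proof (intro set_eqI iffI)
    fix v assume "v \<in> {v. v \<noteq> 0 \<and> pt v \<in> PP UNIV - L}"
    then show "v \<in> - span2 a b" using memL by blast
  next
    fix v assume v: "v \<in> - span2 a b"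
    then have "v \<noteq> 0" using span2_zero by blast
    then show "v \<in> {v. v \<noteq> 0 \<and> pt v \<in> PP UNIV - L}" using memL v pt_in_PP by blast
  qed
  have Lsub: "L \<subseteq> PP UNIV" using LsubR RsubP by blast
  have Lclosed0: "closedin proj_topology L"
    unfolding closedin_def topspace_proj openin_proj
  proof (intro conjI Lsub)
    show "PP UNIV - L \<subseteq> PP UNIV" by blast
    show "open {v. v \<noteq> 0 \<and> pt v \<in> PP UNIV - L}" unfolding pre2
      by (rule open_Compl[OF closed_span2])
  qed
  have Lclosed: "closedin (subtopology proj_topology (Presonance K)) L"
    unfolding closedin_subtopology using Lclosed0 LsubR by blast
  define f :: "complex \<times> complex \<Rightarrow> complex ^ 'n" where "f p = fst p *s a + snd p *s b" for p
  have fcont: "continuous_on UNIV f"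
  proof -
    have "f = (\<lambda>p. \<chi> i. fst p * a $ i + snd p * b $ i)"
      by (rule ext) (simp add: f_def vec_eq_iff)
    then show ?thesis by (simp add: continuous_on_vec_lambda continuous_intros)
  qed
  have fnz: "f p \<noteq> 0" if "p \<noteq> 0" for p
  proof
    assume h: "f p = 0"
    have "wedge (f p) b = (fst p * 1 - snd p * 0) *s ab"
      by (rule wspan) (simp_all add: f_def)
    then have "fst p *s ab = 0" using h by (simp add: wedge_zero_left)
    then have 1: "fst p = 0" using abne smult_eq_0_iff by blast
    have "wedge (f p) a = (fst p * 0 - snd p * 1) *s ab"
      by (rule wspan) (simp_all add: f_def)
    then have "(- snd p) *s ab = 0" using h by (simp add: wedge_zero_left)
    then have 2: "snd p = 0" using abne smult_eq_0_iff by auto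
    show False using 1 2 that by (simp add: prod_eq_iff)
  qed
  have Limg: "L = (pt \<circ> f) ` (- {0})"
  proof (intro set_eqI iffI)
    fix p assume "p \<in> L"
    then obtain u where u: "p = pt u" "u \<in> span2 a b" "u \<noteq> 0" unfolding L_def PP_def by blast
    then obtain c d where "u = c *s a + d *s b" unfolding span2_def by blast
    then have "u = f (c, d)" by (simp add: f_def)
    moreover have "(c, d) \<noteq> 0" using u(3) \<open>u = f (c, d)\<close> by (auto simp: f_def zero_prod_def)
    ultimately show "p \<in> (pt \<circ> f) ` (- {0})" using u(1) by auto
  next
    fix p assume "p \<in> (pt \<circ> f) ` (- {0})"
    then obtain q where q: "q \<noteq> 0" "p = pt (f q)" by auto
    have "f q \<in> span2 a b" unfolding f_def span2_def by blast
    then show "p \<in> L" using memL fnz q by blast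
  qed
  have cm: "continuous_map (top_of_set (- {0})) proj_topology (pt \<circ> f)"
    unfolding continuous_map_def
  proof (intro conjI allI impI)
    show "pt \<circ> f \<in> topspace (top_of_set (- {0})) \<rightarrow> topspace proj_topology"
    proof
      fix q assume "q \<in> topspace (top_of_set (- {0 :: complex \<times> complex}))"
      then have "q \<noteq> 0" by simp
      then show "(pt \<circ> f) q \<in> topspace proj_topology"
        unfolding topspace_proj o_def by (intro pt_in_PP fnz) auto
    qed
    fix U' :: "(complex ^ 'n) set set" assume "openin proj_topology U'"
    then have o: "open {v. v \<noteq> 0 \<and> pt v \<in> U'}" unfolding openin_proj by blast
    have "{x \<in> topspace (top_of_set (- {0})). (pt \<circ> f) x \<in> U'} = (- {0}) \<inter> f -` {v. v \<noteq> 0 \<and> pt v \<in> U'}"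
      using fnz by auto
    then show "openin (top_of_set (- {0})) {x \<in> topspace (top_of_set (- {0})). (pt \<circ> f) x \<in> U'}"
      using continuous_openin_preimage_gen[OF continuous_on_subset[OF fcont] o] by simp
  qed
  have "connected (- {0 :: complex \<times> complex})"
    by (rule path_connected_imp_connected[OF path_connected_punctured_universe]) simp
  then have "connectedin (top_of_set (- {0 :: complex \<times> complex})) (- {0})"
    by (simp add: connectedin_subtopology)
  then have Lconn0: "connectedin proj_topology L"
    unfolding Limg by (rule connectedin_continuous_map_image[OF cm])
  have Lconn: "connectedin (subtopology proj_topology (Presonance K)) L"
    using Lconn0 LsubR by (simp add: connectedin_subtopology)
  have Lne: "L \<noteq> {}"
  proof -
    have "a \<noteq> 0" using abne unfolding ab_def by (auto simp: wedge_zero_left)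
    moreover have "a \<in> span2 a b" unfolding span2_def
      by (rule CollectI, rule exI[of _ 1], rule exI[of _ 0]) simp
    ultimately show ?thesis using memL by blast
  qed
  have "L \<in> connected_components_of (subtopology proj_topology (Presonance K))"
    by (rule clopen_component[OF Lconn Lne Lopen Lclosed])
  then show ?thesis using isot unfolding L_def by blast
qed

end
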